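(* Let $\mathcal{G}^{kdv}$ be the Lie algebra of holomorphic maps $A$ from $\{1/\epsilon<|\lambda|<\infty\}$ to $\mathfrak{sl}(2,\mathbb{C})$ satisfying the KdV reality condition, and for $k\in\mathbb{Z}$ define the bilinear form $\langle A,B\rangle_{\Lambda_k}=\sum_i\mathrm{tr}(A_iB_{-i+k-1})$, where $A=\sum_iA_i\lambda^i$, $B=\sum_iB_i\lambda^i$. Then the restriction of $\langle\cdot,\cdot\rangle_{\Lambda_k}$ to $\mathcal{G}^{kdv}$ is degenerate if $k$ is even, and non-degenerate if $k$ is odd.
   Context: The KdV reality condition: $\overline{A(\bar\lambda)}=A(\lambda)$ and $\phi(\lambda)^{-1}A(\lambda)\phi(\lambda)=\phi(-\lambda)^{-1}A(-\lambda)\phi(-\lambda)$ with $\phi(\lambda)=\begin{pmatrix}1&\lambda\\0&1\end{pmatrix}$. The form $\langle A,B\rangle_{\Lambda_k}$ is the coefficient of $\lambda^{k-1}$ in $\mathrm{tr}(A(\lambda)B(\lambda))$, i.e. $\frac1{2\pi i}\oint\lambda^{-k}\mathrm{tr}(A(\lambda)B(\lambda))d\lambda$. *)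

theory Defs
  imports "HOL-Complex_Analysis.Complex_Analysis"
begin

definition annulus :: "real \<Rightarrow> complex set" where
  "annulus eps = {z. 1 / eps < norm z}"

definition phi :: "complex \<Rightarrow> complex^2^2" where
  "phi l = (\<chi> i j. if i = j then 1 else if i = 1 \<and> j = 2 then l else 0)"

definition mat_cnj :: "complex^2^2 \<Rightarrow> complex^2^2" where
  "mat_cnj M = (\<chi> i j. cnj (M $ i $ j))"

text \<open>Maps are normalised to be 0 outside
  the annulus, so that they are determined by their values on it.\<close>
definition G_kdv :: "real \<Rightarrow> (complex \<Rightarrow> complex^2^2) set" where
  "G_kdv eps = {A.
      (\<forall>i j. (\<lambda>z. A z $ i $ j) holomorphic_on annulus eps) \<and>
      (\<forall>z\<in>annulus eps. trace (A z) = 0) \<and>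
      (\<forall>z\<in>annulus eps. mat_cnj (A (cnj z)) = A z) \<and>
      (\<forall>z\<in>annulus eps.
          matrix_inv (phi z) ** A z ** phi z =
          matrix_inv (phi (- z)) ** A (- z) ** phi (- z)) \<and>
      (\<forall>z. z \<notin> annulus eps \<longrightarrow> A z = 0)}"

text \<open>The form <A,B>_{Lambda_k} = (1/(2 pi i)) \<ointegral> lambda^{-k} tr(A B) d lambda,
  over a circle |lambda| = r inside the annulus (here r = 1/eps + 1; by Cauchy's
  theorem the value is independent of r > 1/eps); this is the coefficient of
  lambda^{k-1} in the Laurent expansion of tr(A B), i.e.
  sum_i tr(A_i B_{k-1-i}).\<close>
definition Lambda_form :: "real \<Rightarrow> int \<Rightarrow> (complex \<Rightarrow> complex^2^2) \<Rightarrow> (complex \<Rightarrow> complex^2^2) \<Rightarrow> complex" where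
  "Lambda_form eps k A B =
     contour_integral (circlepath 0 (1 / eps + 1)) (\<lambda>z. z powi (- k) * trace (A z ** B z))
       / (2 * of_real pi * \<i>)"

definition degenerate_on :: "'a set \<Rightarrow> ('a \<Rightarrow> 'a \<Rightarrow> complex) \<Rightarrow> 'a \<Rightarrow> bool" where
  "degenerate_on G f zero \<longleftrightarrow> (\<exists>A\<in>G. A \<noteq> zero \<and> (\<forall>B\<in>G. f A B = 0))"

end

theory Submission
  imports Defs
begin

unbundle no fps_syntax


lemma open_ext: "open {z::complex. R < norm z}"
  by (intro open_Collect_less continuous_intros)

lemma circ_homot:
  assumes "R < r1" "R < r2" "0 \<le> R" "f holomorphic_on {z. R < norm z}"
  shows "contour_integral (circlepath 0 r1) f = contour_integral (circlepath 0 r2) f"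
proof (rule Cauchy_theorem_homotopic_loops[OF _ open_ext assms(4)])
  show "homotopic_loops {z. R < norm z} (circlepath 0 r1) (circlepath 0 r2)"
  proof (rule homotopic_loops_linear)
    fix t :: real assume "t \<in> {0..1}"
    show "closed_segment (circlepath 0 r1 t) (circlepath 0 r2 t) \<subseteq> {z. R < norm z}"
    proof
      fix x assume "x \<in> closed_segment (circlepath 0 r1 t) (circlepath 0 r2 t)"
      then obtain u where u: "0 \<le> u" "u \<le> 1" and x: "x = (1 - u) *\<^sub>R circlepath 0 r1 t + u *\<^sub>R circlepath 0 r2 t"
        by (auto simp: closed_segment_def)
      define e where "e = exp (2 * of_real pi * \<i> * of_real t)"
      have ne: "norm e = 1" unfolding e_def by (simp add: norm_exp)
      have "x = complex_of_real ((1-u)*r1 + u*r2) * e"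
        unfolding x circlepath e_def by (simp add: scaleR_conv_of_real algebra_simps)
      hence "norm x = norm (complex_of_real ((1-u)*r1 + u*r2)) * norm e" by (simp only: norm_mult)
      hence "norm x = \<bar>(1-u)*r1 + u*r2\<bar>" by (simp only: norm_of_real ne) simp
      moreover have "(1-u)*r1 + u*r2 > R"
      proof -
        have "(1-u)*r1 \<ge> (1-u)*R" using u assms by (intro mult_left_mono) auto
        moreover have "u*r2 \<ge> u*R" using u assms by (intro mult_left_mono) auto
        moreover have "(1-u)*r1 > (1-u)*R \<or> u*r2 > u*R" using u assms by (cases "u = 1") auto
        ultimately show ?thesis by (auto simp: algebra_simps)
      qed
      ultimately show "x \<in> {z. R < norm z}" by simp
    qed
  qed auto
qed auto

lemma geom_zero:
  fixes I :: complex
  assumes "\<And>N. norm I \<le> C * c ^ N" "0 \<le> c" "c < 1"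
  shows "I = 0"
proof -
  have "(\<lambda>N. C * c ^ N) \<longlonglongrightarrow> C * 0"
    by (intro tendsto_mult tendsto_const LIMSEQ_power_zero) (use assms in auto)
  hence "norm I \<le> 0"
    by (intro tendsto_lowerbound[of "\<lambda>N. C * c ^ N"]) (use assms(1) in auto)
  thus ?thesis by simp
qed

lemma cont_bound:
  assumes "continuous_on (sphere (0::complex) \<rho>) g"
  obtains M where "M > 0" "\<And>z. norm z = \<rho> \<Longrightarrow> norm (g z) \<le> M"
proof -
  have "bounded (g ` sphere 0 \<rho>)"
    by (intro compact_imp_bounded compact_continuous_image assms compact_sphere)
  then obtain M where "M > 0" "\<forall>x\<in>g ` sphere 0 \<rho>. norm x \<le> M" by (auto simp: bounded_pos)
  thus ?thesis using that by auto
qed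

lemma series_zero:
  assumes rho: "\<rho> > 0" and cont: "continuous_on (sphere 0 \<rho>) g"
    and mom: "\<And>j::int. contour_integral (circlepath 0 \<rho>) (\<lambda>z. z powi j * g z) = 0"
    and w: "norm w \<noteq> \<rho>"
  shows "contour_integral (circlepath 0 \<rho>) (\<lambda>z. g z / (z - w)) = 0"
proof -
  obtain M where M: "M > 0" "\<And>z. norm z = \<rho> \<Longrightarrow> norm (g z) \<le> M"
    using cont_bound[OF cont] by blast
  have nz: "z \<noteq> 0" "z \<noteq> w" if "z \<in> sphere 0 \<rho>" for z using that rho w by auto
  have ci: "(\<lambda>z. g z * h z) contour_integrable_on circlepath 0 \<rho>"
    if "continuous_on (sphere 0 \<rho>) h" for h
    using rho by (intro contour_integrable_continuous_circlepath) (auto intro!: continuous_intros cont that)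
  have ci1: "(\<lambda>z. g z * (w/z)^N / (z - w)) contour_integrable_on circlepath 0 \<rho>" for N
  proof -
    have "continuous_on (sphere 0 \<rho>) (\<lambda>z. (w/z)^N / (z - w))"
      by (intro continuous_intros) (use nz in auto)
    from ci[OF this] show ?thesis by simp
  qed
  have ci2: "(\<lambda>z. g z * (z/w)^N / (z - w)) contour_integrable_on circlepath 0 \<rho>" if wn0: "w \<noteq> 0" for N
  proof -
    have "continuous_on (sphere 0 \<rho>) (\<lambda>z. (z/w)^N / (z - w))"
      by (intro continuous_intros) (use nz wn0 in auto)
    from ci[OF this] show ?thesis by simp
  qed
  have ci3: "(\<lambda>z. z powi j * g z) contour_integrable_on circlepath 0 \<rho>" for j
  proof -
    have "continuous_on (sphere 0 \<rho>) (\<lambda>z::complex. z powi j)"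
      using continuous_on_power_int[of "sphere (0::complex) \<rho>" "\<lambda>z. z" j] nz by (auto intro: continuous_on_id)
    from ci[OF this] show ?thesis by (simp add: mult.commute)
  qed
  let ?I = "contour_integral (circlepath 0 \<rho>) (\<lambda>z. g z / (z - w))"
  show ?thesis
  proof (cases "norm w < \<rho>")
    case True
    have eq: "?I = contour_integral (circlepath 0 \<rho>) (\<lambda>z. g z * (w/z)^N / (z - w))" for N
    proof (induction N)
      case 0 thus ?case by simp
    next
      case (Suc N)
      have "contour_integral (circlepath 0 \<rho>) (\<lambda>z. g z * (w/z)^N / (z - w)) =
            contour_integral (circlepath 0 \<rho>) (\<lambda>z. w^N * (z powi (- int N - 1) * g z) + g z * (w/z)^Suc N / (z - w))"
      proof (rule contour_integral_eq)
        fix z assume "z \<in> path_image (circlepath 0 \<rho>)"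
        hence z: "z \<noteq> 0" "z \<noteq> w" using nz rho by auto
        have "z powi (- int N - 1) = 1 / z^Suc N"
          by (simp add: power_int_diff power_int_minus z field_simps)
        thus "g z * (w/z)^N / (z - w) = w^N * (z powi (- int N - 1) * g z) + g z * (w/z)^Suc N / (z - w)"
          using z by (simp add: field_simps power_divide)
      qed
      also have "\<dots> = w^N * contour_integral (circlepath 0 \<rho>) (\<lambda>z. z powi (- int N - 1) * g z)
           + contour_integral (circlepath 0 \<rho>) (\<lambda>z. g z * (w/z)^Suc N / (z - w))"
        by (simp only: contour_integral_add[OF contour_integrable_lmul[OF ci3] ci1[of "Suc N"]] contour_integral_lmul[OF ci3])
      finally show ?case using Suc mom by simp
    qed
    have "norm ?I \<le> (M / (\<rho> - norm w) * (2*pi*\<rho>)) * (norm w / \<rho>)^N" for N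
    proof -
      have "((\<lambda>z. g z * (w/z)^N / (z - w)) has_contour_integral ?I) (circlepath 0 \<rho>)"
        using eq[of N] ci1[of N] by (simp add: has_contour_integral_integral)
      hence "norm ?I \<le> (M * (norm w / \<rho>)^N / (\<rho> - norm w)) * (2*pi*\<rho>)"
      proof (rule has_contour_integral_bound_circlepath)
        fix z :: complex assume "norm (z - 0) = \<rho>"
        hence z: "norm z = \<rho>" by simp
        have "norm (z - w) \<ge> \<rho> - norm w" using z norm_triangle_ineq2[of z w] by simp
        moreover have "norm ((w/z)^N) = (norm w / \<rho>)^N" using z by (simp add: norm_power norm_divide)
        ultimately show "norm (g z * (w/z)^N / (z - w)) \<le> M * (norm w / \<rho>)^N / (\<rho> - norm w)"
          using M(2)[OF z] M(1) True rho
          by (auto simp: norm_mult norm_divide intro!: frac_le mult_mono)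
      qed (use rho True M in auto)
      thus ?thesis by (simp add: algebra_simps)
    qed
    thus ?thesis by (rule geom_zero) (use True rho in auto)
  next
    case False
    hence F: "norm w > \<rho>" using w by simp
    have wn0: "w \<noteq> 0" using F rho by auto
    have eq: "?I = contour_integral (circlepath 0 \<rho>) (\<lambda>z. g z * (z/w)^N / (z - w))" for N
    proof (induction N)
      case 0 thus ?case by simp
    next
      case (Suc N)
      have wn: "w \<noteq> 0" using F rho by auto
      have "contour_integral (circlepath 0 \<rho>) (\<lambda>z. g z * (z/w)^N / (z - w)) =
            contour_integral (circlepath 0 \<rho>) (\<lambda>z. (- 1 / w^Suc N) * (z powi (int N) * g z) + g z * (z/w)^Suc N / (z - w))"
      proof (rule contour_integral_eq)
        fix z assume "z \<in> path_image (circlepath 0 \<rho>)"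
        hence z: "z \<noteq> 0" "z \<noteq> w" using nz rho by auto
        thus "g z * (z/w)^N / (z - w) = (- 1 / w^Suc N) * (z powi (int N) * g z) + g z * (z/w)^Suc N / (z - w)"
          using wn by (simp add: field_simps power_divide)
      qed
      also have "\<dots> = (- 1 / w^Suc N) * contour_integral (circlepath 0 \<rho>) (\<lambda>z. z powi (int N) * g z)
           + contour_integral (circlepath 0 \<rho>) (\<lambda>z. g z * (z/w)^Suc N / (z - w))"
        by (simp only: contour_integral_add[OF contour_integrable_lmul[OF ci3] ci2[OF wn, of "Suc N"]] contour_integral_lmul[OF ci3])
      finally show ?case using Suc mom[of "int N"] by simp
    qed
    have "norm ?I \<le> (M / (norm w - \<rho>) * (2*pi*\<rho>)) * (\<rho> / norm w)^N" for N
    proof -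
      have "((\<lambda>z. g z * (z/w)^N / (z - w)) has_contour_integral ?I) (circlepath 0 \<rho>)"
        using eq[of N] ci2[OF wn0, of N] by (simp add: has_contour_integral_integral)
      hence "norm ?I \<le> (M * (\<rho> / norm w)^N / (norm w - \<rho>)) * (2*pi*\<rho>)"
      proof (rule has_contour_integral_bound_circlepath)
        fix z :: complex assume "norm (z - 0) = \<rho>"
        hence z: "norm z = \<rho>" by simp
        have "norm (z - w) \<ge> norm w - \<rho>" using z norm_triangle_ineq2[of w z] by (simp add: norm_minus_commute)
        moreover have "norm ((z/w)^N) = (\<rho> / norm w)^N" using z by (simp add: norm_power norm_divide)
        ultimately show "norm (g z * (z/w)^N / (z - w)) \<le> M * (\<rho> / norm w)^N / (norm w - \<rho>)"
          using M(2)[OF z] M(1) F rho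
          by (auto simp: norm_mult norm_divide intro!: frac_le mult_mono)
      qed (use rho F M in auto)
      thus ?thesis by (simp add: algebra_simps)
    qed
    thus ?thesis by (rule geom_zero) (use F rho in \<open>auto simp: divide_simps\<close>)
  qed
qed


lemma neg_circ: "uminus \<circ> circlepath 0 r = shiftpath (1/2) (circlepath 0 r)"
proof
  fix x :: real
  have e1: "exp (2 * of_real pi * \<i> * of_real (1/2 + x)) = - exp (2 * of_real pi * \<i> * of_real x)"
  proof -
    have "2 * of_real pi * \<i> * of_real (1/2 + x) = pi * \<i> + 2 * of_real pi * \<i> * of_real x"
      by (simp add: algebra_simps)
    thus ?thesis by (simp add: exp_add)
  qed
  have e2: "exp (2 * of_real pi * \<i> * of_real (1/2 + x - 1)) = - exp (2 * of_real pi * \<i> * of_real x)"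
  proof -
    have "2 * of_real pi * \<i> * of_real (1/2 + x - 1) = - (pi * \<i>) + 2 * of_real pi * \<i> * of_real x"
      by (simp add: algebra_simps)
    thus ?thesis by (simp add: exp_diff exp_add exp_minus)
  qed
  show "(uminus \<circ> circlepath 0 r) x = shiftpath (1/2) (circlepath 0 r) x"
    unfolding shiftpath_def circlepath o_def using e1 e2 by simp
qed

lemma even_zero:
  assumes "\<And>z. norm z = \<bar>r\<bar> \<Longrightarrow> g (- z) = g z"
  shows "contour_integral (circlepath 0 r) g = 0"
proof -
  let ?C = "contour_integral (circlepath 0 r) g"
  have "?C = contour_integral (shiftpath (1/2) (circlepath 0 r)) g"
    by (rule contour_integral_shiftpath[symmetric]) auto
  also have "\<dots> = contour_integral (uminus \<circ> circlepath 0 r) g" by (simp add: neg_circ)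
  also have "\<dots> = - contour_integral (circlepath 0 r) (\<lambda>x. g (- x))"
    by (rule contour_integral_negatepath) simp
  also have "contour_integral (circlepath 0 r) (\<lambda>x. g (- x)) = ?C"
    by (rule contour_integral_eq) (use assms in auto)
  finally show ?thesis by simp
qed

lemma uniq:
  assumes R: "0 < R" and r: "R < r" and hol: "f holomorphic_on {z. R < norm z}"
    and mom: "\<And>j::int. contour_integral (circlepath 0 r) (\<lambda>z. z powi j * f z) = 0"
    and w: "R < norm w"
  shows "f w = 0"
proof -
  let ?S = "{z::complex. R < norm z}"
  have nz: "z \<noteq> 0" if "z \<in> ?S" for z using that R by auto
  have momr: "contour_integral (circlepath 0 \<rho>) (\<lambda>z. z powi j * f z) = 0" if "R < \<rho>" for \<rho> j
  proof -
    have "(\<lambda>z. z powi j * f z) holomorphic_on ?S"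
      by (intro holomorphic_intros hol) (use nz in auto)
    hence "contour_integral (circlepath 0 \<rho>) (\<lambda>z. z powi j * f z) = contour_integral (circlepath 0 r) (\<lambda>z. z powi j * f z)"
      by (intro circ_homot) (use that r R in auto)
    thus ?thesis using mom by simp
  qed
  have J: "contour_integral (circlepath 0 \<rho>) (\<lambda>z. f z / (z - w)) = 0" if "R < \<rho>" "norm w \<noteq> \<rho>" for \<rho>
  proof (rule series_zero)
    show "continuous_on (sphere 0 \<rho>) f"
      by (rule holomorphic_on_imp_continuous_on, rule holomorphic_on_subset[OF hol]) (use that in auto)
  qed (use that R momr in auto)
  define r1 where "r1 = (R + norm w) / 2"
  define r2 where "r2 = norm w + 1"
  have r1: "R < r1" "r1 < norm w" and r2: "R < r2" "norm w < r2" using w by (auto simp: r1_def r2_def)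
  define h where "h = (\<lambda>z. if z = w then deriv f w else (f z - f w) / (z - w))"
  have hh: "h holomorphic_on ?S" unfolding h_def
    by (rule pole_lemma[OF hol]) (use w open_ext interior_open in auto)
  have eqh: "contour_integral (circlepath 0 r1) h = contour_integral (circlepath 0 r2) h"
    by (rule circ_homot[OF _ _ _ hh]) (use r1 r2 R in auto)
  have hsplit: "contour_integral (circlepath 0 \<rho>) h =
      contour_integral (circlepath 0 \<rho>) (\<lambda>z. f z / (z - w)) - f w * contour_integral (circlepath 0 \<rho>) (\<lambda>z. 1 / (z - w))"
    if "R < \<rho>" "norm w \<noteq> \<rho>" for \<rho>
  proof -
    have cf: "continuous_on (sphere 0 \<rho>) f"
      by (rule holomorphic_on_imp_continuous_on, rule holomorphic_on_subset[OF hol]) (use that in auto)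
    have nw: "z \<noteq> w" if "z \<in> sphere 0 \<rho>" for z using that \<open>norm w \<noteq> \<rho>\<close> by auto
    have i1: "(\<lambda>z. f z / (z - w)) contour_integrable_on circlepath 0 \<rho>"
      by (rule contour_integrable_continuous_circlepath) (use that R nw in \<open>auto intro!: continuous_intros cf\<close>)
    have i2: "(\<lambda>z. 1 / (z - w)) contour_integrable_on circlepath 0 \<rho>"
      by (rule contour_integrable_continuous_circlepath) (use that R nw in \<open>auto intro!: continuous_intros\<close>)
    have "contour_integral (circlepath 0 \<rho>) h = contour_integral (circlepath 0 \<rho>) (\<lambda>z. f z / (z - w) - f w * (1 / (z - w)))"
      by (rule contour_integral_eq) (use nw R that in \<open>auto simp: h_def diff_divide_distrib\<close>)
    also have "\<dots> = contour_integral (circlepath 0 \<rho>) (\<lambda>z. f z / (z - w)) - f w * contour_integral (circlepath 0 \<rho>) (\<lambda>z. 1 / (z - w))"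
      by (simp only: contour_integral_diff[OF i1 contour_integrable_lmul[OF i2]] contour_integral_lmul[OF i2])
    finally show ?thesis .
  qed
  have K2: "contour_integral (circlepath 0 r2) (\<lambda>z. 1 / (z - w)) = 2 * of_real pi * \<i>"
    using Cauchy_integral_circlepath_simple[of "\<lambda>_. 1" 0 r2 w] r2 by (auto intro: contour_integral_unique)
  have K1: "contour_integral (circlepath 0 r1) (\<lambda>z. 1 / (z - w)) = 0"
  proof (rule contour_integral_unique, rule Cauchy_theorem_convex_simple[of _ "ball 0 (norm w)"])
    show "(\<lambda>z. 1 / (z - w)) holomorphic_on ball 0 (norm w)"
      by (intro holomorphic_intros) auto
    show "path_image (circlepath 0 r1) \<subseteq> ball 0 (norm w)" using r1 R by auto
  qed auto
  have "0 - f w * 0 = 0 - f w * (2 * of_real pi * \<i>)"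
    using eqh hsplit[of r1] hsplit[of r2] J[of r1] J[of r2] K1 K2 r1 r2 by simp
  thus ?thesis by simp
qed



definition mat2 :: "complex \<Rightarrow> complex \<Rightarrow> complex \<Rightarrow> complex \<Rightarrow> complex^2^2" where
  "mat2 p q r s = (\<chi> i j. if i = 1 then (if j = 1 then p else q) else (if j = 1 then r else s))"

lemma mat2_nth [simp]:
  "mat2 p q r s $ 1 $ 1 = p" "mat2 p q r s $ 1 $ 2 = q"
  "mat2 p q r s $ 2 $ 1 = r" "mat2 p q r s $ 2 $ 2 = s"
  by (simp_all add: mat2_def)

lemma mat2_eta: "M = mat2 (M$1$1) (M$1$2) (M$2$1) (M$2$2)"
  by (simp add: vec_eq_iff forall_2 mat2_def)

lemma mat2_eq [simp]: "mat2 a b c d = mat2 a' b' c' d' \<longleftrightarrow> a = a' \<and> b = b' \<and> c = c' \<and> d = d'"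
  by (auto simp: vec_eq_iff forall_2 mat2_def)

lemma mat2_mult [simp]:
  "mat2 a b c d ** mat2 e f g h = mat2 (a*e+b*g) (a*f+b*h) (c*e+d*g) (c*f+d*h)"
  by (simp add: matrix_matrix_mult_def vec_eq_iff forall_2 sum_2 mat2_def)

lemma mat2_trace [simp]: "trace (mat2 a b c d) = a + d"
  by (simp add: trace_def sum_2)

lemma mat2_zero: "(0::complex^2^2) = mat2 0 0 0 0"
  by (simp add: vec_eq_iff forall_2 mat2_def)

lemma mat2_eq0 [simp]: "mat2 a b c d = 0 \<longleftrightarrow> a = 0 \<and> b = 0 \<and> c = 0 \<and> d = 0"
  by (simp add: mat2_zero)

lemma mat2_cnj [simp]: "mat_cnj (mat2 a b c d) = mat2 (cnj a) (cnj b) (cnj c) (cnj d)"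
  by (simp add: mat_cnj_def vec_eq_iff forall_2 mat2_def)

lemma phi_mat2: "phi z = mat2 1 z 0 1"
  by (simp add: phi_def mat2_def vec_eq_iff forall_2)

lemma mat2_one: "mat 1 = mat2 1 0 0 1"
  by (simp add: mat_def mat2_def vec_eq_iff forall_2)

lemma inv_phi: "matrix_inv (phi z) = phi (- z)"
proof -
  have 1: "phi z ** phi (-z) = mat 1" "phi (-z) ** phi z = mat 1"
    by (simp_all add: phi_mat2 mat2_one)
  let ?X = "matrix_inv (phi z)"
  have "phi z ** ?X = mat 1 \<and> ?X ** phi z = mat 1"
    unfolding matrix_inv_def by (rule someI[of _ "phi (-z)"]) (use 1 in simp)
  hence "?X = ?X ** (phi z ** phi (-z))" using 1 by (simp add: matrix_mul_rid)
  also have "\<dots> = (?X ** phi z) ** phi (-z)" by (simp add: matrix_mul_assoc)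
  also have "\<dots> = phi (-z)" using \<open>phi z ** ?X = mat 1 \<and> ?X ** phi z = mat 1\<close> by (simp add: matrix_mul_lid)
  finally show ?thesis .
qed

lemma conj_phi: "matrix_inv (phi z) ** mat2 a b c d ** phi z =
   mat2 (a - z*c) ((a - z*c)*z + b - z*d) c (c*z + d)"
  unfolding inv_phi by (simp add: phi_mat2 algebra_simps)


definition m11 :: "complex^2^2 \<Rightarrow> complex" where "m11 M = M $ 1 $ 1"
definition m12 :: "complex^2^2 \<Rightarrow> complex" where "m12 M = M $ 1 $ 2"
definition m21 :: "complex^2^2 \<Rightarrow> complex" where "m21 M = M $ 2 $ 1"
definition m22 :: "complex^2^2 \<Rightarrow> complex" where "m22 M = M $ 2 $ 2"

lemma m_mat2 [simp]: "m11 (mat2 a b c d) = a" "m12 (mat2 a b c d) = b" "m21 (mat2 a b c d) = c" "m22 (mat2 a b c d) = d"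
  by (simp_all add: m11_def m12_def m21_def m22_def)

lemma mat2_eta': "M = mat2 (m11 M) (m12 M) (m21 M) (m22 M)"
  unfolding m11_def m12_def m21_def m22_def by (rule mat2_eta)

lemma trace_gen: "trace M = m11 M + m22 M"
  by (simp add: trace_def sum_2 m11_def m22_def)

lemma trace_mult_gen: "trace (M ** mat2 p q r s) = m11 M * p + m12 M * r + m21 M * q + m22 M * s"
  by (simp add: trace_def sum_2 matrix_matrix_mult_def mat2_def m11_def m12_def m21_def m22_def)

lemma conj_phi_gen: "matrix_inv (phi z) ** M ** phi z =
   mat2 (m11 M - z * m21 M) ((m11 M - z * m21 M) * z + m12 M - z * m22 M) (m21 M) (m21 M * z + m22 M)"
proof -
  obtain a b c d where "M = mat2 a b c d" using mat2_eta'[of M] by blast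
  thus ?thesis by (simp only: conj_phi m_mat2)
qed

lemma trace_mult_gen2: "trace (mat2 p q r s ** M) = p * m11 M + q * m21 M + r * m12 M + s * m22 M"
  by (simp add: trace_def sum_2 matrix_matrix_mult_def mat2_def m11_def m12_def m21_def m22_def)



lemma ann_iff: "z \<in> annulus eps \<longleftrightarrow> 1/eps < norm z" by (simp add: annulus_def)
lemma ann_neg [simp]: "- z \<in> annulus eps \<longleftrightarrow> z \<in> annulus eps" by (simp add: annulus_def)
lemma ann_cnj [simp]: "cnj z \<in> annulus eps \<longleftrightarrow> z \<in> annulus eps" by (simp add: annulus_def)
lemma ann_nz: "eps > 0 \<Longrightarrow> z \<in> annulus eps \<Longrightarrow> z \<noteq> 0"
  by (auto simp: annulus_def)

definition Bm :: "real \<Rightarrow> (complex \<Rightarrow> complex) \<Rightarrow> (complex \<Rightarrow> complex) \<Rightarrow> (complex \<Rightarrow> complex) \<Rightarrow> (complex \<Rightarrow> complex) \<Rightarrow> complex \<Rightarrow> complex^2^2" where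
  "Bm eps p q r s = (\<lambda>z. if z \<in> annulus eps then mat2 (p z) (q z) (r z) (s z) else 0)"

lemma Bm_in_G:
  assumes "p holomorphic_on annulus eps" "q holomorphic_on annulus eps"
    "r holomorphic_on annulus eps" "s holomorphic_on annulus eps"
    and tr: "\<And>z. z \<in> annulus eps \<Longrightarrow> p z + s z = 0"
    and cj: "\<And>z. z \<in> annulus eps \<Longrightarrow> cnj (p (cnj z)) = p z \<and> cnj (q (cnj z)) = q z \<and> cnj (r (cnj z)) = r z \<and> cnj (s (cnj z)) = s z"
    and rl: "\<And>z. z \<in> annulus eps \<Longrightarrow>
       mat2 (p z - z * r z) ((p z - z * r z) * z + q z - z * s z) (r z) (r z * z + s z) =
       mat2 (p (-z) - (-z) * r (-z)) ((p (-z) - (-z) * r (-z)) * (-z) + q (-z) - (-z) * s (-z)) (r (-z)) (r (-z) * (-z) + s (-z))"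
  shows "Bm eps p q r s \<in> G_kdv eps"
  unfolding G_kdv_def mem_Collect_eq
proof (intro conjI allI ballI impI)
  fix i j :: 2
  have e: "(\<lambda>z. Bm eps p q r s z $ i $ j) holomorphic_on annulus eps \<longleftrightarrow>
        (\<lambda>z. mat2 (p z) (q z) (r z) (s z) $ i $ j) holomorphic_on annulus eps"
    by (rule holomorphic_cong) (auto simp: Bm_def)
  show "(\<lambda>z. Bm eps p q r s z $ i $ j) holomorphic_on annulus eps"
    unfolding e using exhaust_2[of i] exhaust_2[of j] assms(1-4) by auto
next
  fix z assume z: "z \<in> annulus eps"
  show "trace (Bm eps p q r s z) = 0" using z tr by (simp add: Bm_def)
  show "mat_cnj (Bm eps p q r s (cnj z)) = Bm eps p q r s z" using z cj[OF z] by (simp add: Bm_def)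
  show "matrix_inv (phi z) ** Bm eps p q r s z ** phi z =
        matrix_inv (phi (- z)) ** Bm eps p q r s (- z) ** phi (- z)"
    using z rl[OF z] ann_neg[of z eps] unfolding Bm_def by (simp only: if_True conj_phi)
next
  fix z assume "z \<notin> annulus eps" thus "Bm eps p q r s z = 0" by (simp add: Bm_def)
qed

lemma G_hol:
  fixes A :: "complex \<Rightarrow> complex^2^2"
  assumes "A \<in> G_kdv eps"
  shows "(\<lambda>z. m11 (A z)) holomorphic_on annulus eps" "(\<lambda>z. m12 (A z)) holomorphic_on annulus eps"
        "(\<lambda>z. m21 (A z)) holomorphic_on annulus eps" "(\<lambda>z. m22 (A z)) holomorphic_on annulus eps"
  using assms unfolding G_kdv_def m11_def m12_def m21_def m22_def by auto

lemma G_tr: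
  fixes A :: "complex \<Rightarrow> complex^2^2"
  assumes "A \<in> G_kdv eps" "z \<in> annulus eps" shows "m11 (A z) + m22 (A z) = 0"
proof -
  have "trace (A z) = 0" using assms unfolding G_kdv_def mem_Collect_eq by blast
  thus ?thesis by (simp only: trace_gen)
qed

lemma G_out:
  fixes A :: "complex \<Rightarrow> complex^2^2"
  assumes "A \<in> G_kdv eps" "z \<notin> annulus eps" shows "A z = 0"
  using assms unfolding G_kdv_def mem_Collect_eq by blast

lemma G_real:
  fixes A :: "complex \<Rightarrow> complex^2^2"
  assumes "A \<in> G_kdv eps" "z \<in> annulus eps"
  shows "mat2 (m11 (A z) - z * m21 (A z)) ((m11 (A z) - z * m21 (A z)) * z + m12 (A z) - z * m22 (A z)) (m21 (A z)) (m21 (A z) * z + m22 (A z)) =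
    mat2 (m11 (A (-z)) - (-z) * m21 (A (-z))) ((m11 (A (-z)) - (-z) * m21 (A (-z))) * (-z) + m12 (A (-z)) - (-z) * m22 (A (-z))) (m21 (A (-z))) (m21 (A (-z)) * (-z) + m22 (A (-z)))"
proof -
  have "matrix_inv (phi z) ** A z ** phi z = matrix_inv (phi (- z)) ** A (- z) ** phi (- z)"
    using assms(1,2) unfolding G_kdv_def mem_Collect_eq by blast
  thus ?thesis by (simp only: conj_phi_gen)
qed

lemma form_cong:
  fixes A B :: "complex \<Rightarrow> complex^2^2"
  assumes eps: "eps > 0" and "\<And>z. z \<in> annulus eps \<Longrightarrow> trace (A z ** B z) = G z"
  shows "Lambda_form eps k A B = contour_integral (circlepath 0 (1/eps+1)) (\<lambda>z. z powi (-k) * G z) / (2 * of_real pi * \<i>)"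
proof -
  have "contour_integral (circlepath 0 (1/eps+1)) (\<lambda>z. z powi (-k) * trace (A z ** B z)) =
        contour_integral (circlepath 0 (1/eps+1)) (\<lambda>z. z powi (-k) * G z)"
  proof (rule contour_integral_eq)
    fix z assume "z \<in> path_image (circlepath 0 (1/eps+1))"
    hence "z \<in> annulus eps" using eps by (auto simp: annulus_def)
    thus "z powi (-k) * trace (A z ** B z) = z powi (-k) * G z" using assms(2) by simp
  qed
  thus ?thesis unfolding Lambda_form_def by simp
qed

lemma moments:
  assumes eps: "eps > 0" and k: "odd k" and hol: "f holomorphic_on annulus eps"
    and ev: "\<And>z. z \<in> annulus eps \<Longrightarrow> f (- z) = f z"
    and m: "\<And>n::int. contour_integral (circlepath 0 (1/eps+1)) (\<lambda>z. z powi (-k) * (z powi (2*n) * f z)) = 0"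
    and w: "w \<in> annulus eps"
  shows "f w = 0"
proof -
  have h1: "f holomorphic_on {z. 1 / eps < norm z}" using hol by (simp add: annulus_def)
  have h2: "1 / eps < norm w" using w by (simp add: annulus_def)
  have h3: "contour_integral (circlepath 0 (1 / eps + 1)) (\<lambda>z. z powi j * f z) = 0"
   if "True" for j :: int
  proof (cases "even j")
    case True
    show ?thesis
    proof (rule even_zero)
      fix z :: complex assume "norm z = \<bar>1/eps+1\<bar>"
      hence "z \<in> annulus eps" using eps by (auto simp: annulus_def)
      thus "(- z) powi j * f (- z) = z powi j * f z" using True ev by simp
    qed
  next
    case False
    define n where "n = (j + k) div 2"
    have n: "- k + 2 * n = j" using False k unfolding n_def
      by (metis add.commute add_diff_cancel_left' diff_add_cancel minus_diff_eq odd_add dvd_mult_div_cancel)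
    have "contour_integral (circlepath 0 (1/eps+1)) (\<lambda>z. z powi j * f z) =
          contour_integral (circlepath 0 (1/eps+1)) (\<lambda>z. z powi (-k) * (z powi (2*n) * f z))"
    proof (rule contour_integral_eq)
      fix z assume "z \<in> path_image (circlepath 0 (1/eps+1))"
      hence "z \<in> annulus eps" using eps by (auto simp: annulus_def)
      hence "z \<noteq> 0" using ann_nz eps by blast
      hence "z powi j = z powi (-k) * z powi (2*n)" using n power_int_add by metis
      thus "z powi j * f z = z powi (-k) * (z powi (2*n) * f z)" by simp
    qed
    thus ?thesis using m by simp
  qed
  show ?thesis by (rule uniq[OF _ _ h1 h3 h2]) (use eps in auto)
qed

lemma powhol: "eps > 0 \<Longrightarrow> (\<lambda>z. z powi m) holomorphic_on annulus eps"
  by (rule holomorphic_on_power_int) (auto intro: holomorphic_on_id dest: ann_nz)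

theorem proposition6p2:
  fixes eps :: real and k :: int
  assumes "eps > 0"
  shows "(even k \<longrightarrow> degenerate_on (G_kdv eps) (Lambda_form eps k) (\<lambda>_. 0))
       \<and> (odd k \<longrightarrow> \<not> degenerate_on (G_kdv eps) (Lambda_form eps k) (\<lambda>_. 0))"
proof -
  have eps: "eps > 0" by fact
  define r0 where "r0 = 1/eps + 1"
  have r0p: "1/eps < r0" "0 < r0" using eps by (auto simp: r0_def intro: add_pos_pos)
  have r0S: "complex_of_real r0 \<in> annulus eps"
    unfolding annulus_def mem_Collect_eq norm_of_real using r0p by simp
  have form0: "contour_integral (circlepath 0 (1/eps+1)) (\<lambda>z. z powi (-k) * G z) = 0"
    if "\<And>z. z \<in> annulus eps \<Longrightarrow> trace (A z ** B z) = G z" "Lambda_form eps k A B = 0"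
    for A B :: "complex \<Rightarrow> complex^2^2" and G
    using form_cong[OF eps that(1), where k = k] that(2) by simp
  have hP: "(\<lambda>z. z powi m) holomorphic_on annulus eps" for m using powhol[OF eps] .
  show ?thesis
  proof (intro conjI impI)
    assume ke: "even k"
    define A0 where "A0 = Bm eps (\<lambda>_. 0) (\<lambda>_. 1) (\<lambda>_. 0) (\<lambda>_. 0)"
    have A0G: "A0 \<in> G_kdv eps" unfolding A0_def
      by (rule Bm_in_G) (auto intro: holomorphic_intros)
    have A0nz: "A0 \<noteq> (\<lambda>_. 0)"
    proof
      assume "A0 = (\<lambda>_. 0)"
      hence "A0 (complex_of_real r0) = 0" by simp
      thus False using r0S by (simp add: A0_def Bm_def)
    qed
    have "\<forall>B\<in>G_kdv eps. Lambda_form eps k A0 B = 0"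
    proof
      fix B assume BG: "B \<in> G_kdv eps"
      have "Lambda_form eps k A0 B = contour_integral (circlepath 0 (1/eps+1)) (\<lambda>z. z powi (-k) * m21 (B z)) / (2 * of_real pi * \<i>)"
        by (rule form_cong[OF eps]) (simp add: A0_def Bm_def trace_mult_gen2)
      also have "contour_integral (circlepath 0 (1/eps+1)) (\<lambda>z. z powi (-k) * m21 (B z)) = 0"
      proof (rule even_zero)
        fix z :: complex assume "norm z = \<bar>1/eps+1\<bar>"
        hence z: "z \<in> annulus eps" using eps by (auto simp: annulus_def)
        have "m21 (B z) = m21 (B (-z))" using G_real[OF BG z] by simp
        thus "(- z) powi (- k) * m21 (B (- z)) = z powi (- k) * m21 (B z)" using ke by simp
      qed
      finally show "Lambda_form eps k A0 B = 0" by simp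
    qed
    thus "degenerate_on (G_kdv eps) (Lambda_form eps k) (\<lambda>_. 0)"
      unfolding degenerate_on_def using A0G A0nz by blast
  next
    assume ko: "odd k"
    show "\<not> degenerate_on (G_kdv eps) (Lambda_form eps k) (\<lambda>_. 0)"
    proof
      assume "degenerate_on (G_kdv eps) (Lambda_form eps k) (\<lambda>_. 0)"
      then obtain A where AG: "A \<in> G_kdv eps" and Anz: "A \<noteq> (\<lambda>_. 0)"
        and Af: "\<And>B. B \<in> G_kdv eps \<Longrightarrow> Lambda_form eps k A B = 0"
        unfolding degenerate_on_def by blast
      define a where "a = (\<lambda>z. m11 (A z))"
      define b where "b = (\<lambda>z. m12 (A z))"
      define c where "c = (\<lambda>z. m21 (A z))"
      define d where "d = (\<lambda>z. m22 (A z))"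
      have ha: "a holomorphic_on annulus eps" and hb: "b holomorphic_on annulus eps"
        and hc: "c holomorphic_on annulus eps" and hd: "d holomorphic_on annulus eps"
        using G_hol[OF AG] unfolding a_def b_def c_def d_def by auto
      have R: "a z - z * c z = a (-z) - (-z) * c (-z) \<and>
               (a z - z * c z) * z + b z - z * d z = (a (-z) - (-z) * c (-z)) * (-z) + b (-z) - (-z) * d (-z) \<and>
               c z = c (-z) \<and> c z * z + d z = c (-z) * (-z) + d (-z)" if "z \<in> annulus eps" for z
        using G_real[OF AG that] unfolding mat2_eq a_def b_def c_def d_def .
      have tr: "a z + d z = 0" if "z \<in> annulus eps" for z
        using G_tr[OF AG that] unfolding a_def d_def .
      have Az: "A z = mat2 (a z) (b z) (c z) (d z)" for z
        unfolding a_def b_def c_def d_def by (rule mat2_eta')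
      have Pev: "(- z) powi (2 * n) = z powi (2 * n)" for z :: complex and n :: int by simp
      have Pcnj: "cnj (cnj z powi (2 * n)) = z powi (2 * n)" for z :: complex and n :: int by simp
      have c0: "c w = 0" if w: "w \<in> annulus eps" for w
      proof (rule moments[OF eps ko hc _ _ w])
        show "c (- z) = c z" if "z \<in> annulus eps" for z using R[OF that] by simp
        fix n :: int
        define T where "T = Bm eps (\<lambda>_. 0) (\<lambda>z. z powi (2 * n)) (\<lambda>_. 0) (\<lambda>_. 0)"
        have TG: "T \<in> G_kdv eps" unfolding T_def
          by (rule Bm_in_G) (auto intro: holomorphic_intros hP)
        show "contour_integral (circlepath 0 (1/eps+1)) (\<lambda>z. z powi (-k) * (z powi (2 * n) * c z)) = 0"
          by (rule form0[OF _ Af[OF TG]]) (simp add: T_def Bm_def Az trace_mult_gen mult.commute)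
      qed
      have a0: "a w = 0" if w: "w \<in> annulus eps" for w
      proof -
        have "2 * a w = 0"
        proof (rule moments[OF eps ko _ _ _ w, where f = "\<lambda>z. 2 * a z"])
          show "(\<lambda>z. 2 * a z) holomorphic_on annulus eps" by (intro holomorphic_intros ha)
          show "2 * a (- z) = 2 * a z" if "z \<in> annulus eps" for z using R[OF that] c0[OF that] c0[of "-z"] that by simp
          fix n :: int
          define T where "T = Bm eps (\<lambda>z. z powi (2 * n)) (\<lambda>z. - 2 * z * z powi (2 * n)) (\<lambda>_. 0) (\<lambda>z. - (z powi (2 * n)))"
          have TG: "T \<in> G_kdv eps" unfolding T_def
            by (rule Bm_in_G) (auto intro!: holomorphic_intros hP simp: algebra_simps)
          show "contour_integral (circlepath 0 (1/eps+1)) (\<lambda>z. z powi (-k) * (z powi (2 * n) * (2 * a z))) = 0"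
          proof (rule form0[OF _ Af[OF TG]])
            fix z assume z: "z \<in> annulus eps"
            have "d z = - a z" using tr[OF z] by (simp add: eq_neg_iff_add_eq_0 add.commute)
            thus "trace (A z ** T z) = z powi (2 * n) * (2 * a z)"
              using z c0[OF z] by (simp add: T_def Bm_def Az trace_mult_gen algebra_simps)
          qed
        qed
        thus ?thesis by simp
      qed
      have d0: "d w = 0" if w: "w \<in> annulus eps" for w
        using tr[OF w] a0[OF w] by simp
      have b0: "b w = 0" if w: "w \<in> annulus eps" for w
      proof (rule moments[OF eps ko hb _ _ w])
        show "b (- z) = b z" if "z \<in> annulus eps" for z
          using R[OF that] a0[OF that] c0[OF that] d0[OF that] a0[of "-z"] c0[of "-z"] d0[of "-z"] that by simp
        fix n :: int
        define T where "T = Bm eps (\<lambda>z. z * z powi (2 * n)) (\<lambda>_. 0) (\<lambda>z. z powi (2 * n)) (\<lambda>z. - (z * z powi (2 * n)))"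
        have TG: "T \<in> G_kdv eps" unfolding T_def
          by (rule Bm_in_G) (auto intro!: holomorphic_intros hP simp: algebra_simps)
        show "contour_integral (circlepath 0 (1/eps+1)) (\<lambda>z. z powi (-k) * (z powi (2 * n) * b z)) = 0"
        proof (rule form0[OF _ Af[OF TG]])
          fix z assume z: "z \<in> annulus eps"
          show "trace (A z ** T z) = z powi (2 * n) * b z"
            using z a0[OF z] d0[OF z] by (simp add: T_def Bm_def Az trace_mult_gen algebra_simps)
        qed
      qed
      have "A = (\<lambda>_. 0)"
      proof
        fix z show "A z = 0"
        proof (cases "z \<in> annulus eps")
          case True thus ?thesis using a0 b0 c0 d0 by (simp add: Az)
        next
          case False thus ?thesis by (rule G_out[OF AG])
        qed
      qed
      thus False using Anz by simp
    qed
  qed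
qed

end
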